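(* Let $f:2^N\to\mathbb R$ be monotone with $f(\emptyset)\ge0$, and let $\mathcal D$ be a product distribution on $2^N$ with bounded marginals. Let $p$ be a polynomial and $\epsilon\ge f(N)/p(n)$. Then, given a sufficiently large polynomial number of samples $(S_j,f(S_j))$ with $S_j$ i.i.d. from $\mathcal D$, with probability at least $1-O(e^{-n})$ the estimates $\hat v_i$ satisfy, for all $e_i\in N$, $\big|\hat v_i-\mathbb E_{S\sim\mathcal D\mid e_i\notin S}[f_S(e_i)]\big|\le\epsilon$.
   Context: $N=\{e_1,\dots,e_n\}$, $f_S(e)=f(S\cup\{e\})-f(S)$. A product distribution includes each element independently; bounded marginals means for every $e$, $\Pr[e\in S]$ and $\Pr[e\notin S]$ ($S\sim\mathcal D$) lie between $1/\mathrm{poly}(n)$ and $1-1/\mathrm{poly}(n)$. For each $i$, $\mathcal S_i$ (resp. $\mathcal S_{-i}$) is the collection of samples containing (resp. not containing) $e_i$, and $\hat v_i=\frac{1}{|\mathcal S_i|}\sum_{S\in\mathcal S_i}f(S)-\frac{1}{|\mathcal S_{-i}|}\sum_{S\in\mathcal S_{-i}}f(S)$. *)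

theory Defs
  imports "HOL-Probability.Probability" "HOL-Computational_Algebra.Polynomial"
begin

text \<open>Ground set N = {0..<n}; element e_i is the index i.\<close>

definition prod_dist :: "nat \<Rightarrow> (nat \<Rightarrow> real) \<Rightarrow> nat set pmf" where
  "prod_dist n \<pi> = map_pmf (\<lambda>x. {i\<in>{..<n}. x i}) (Pi_pmf {..<n} False (\<lambda>i. bernoulli_pmf (\<pi> i)))"

definition samples :: "nat \<Rightarrow> 'a set pmf \<Rightarrow> (nat \<Rightarrow> 'a set) pmf" where
  "samples k D = Pi_pmf {..<k} {} (\<lambda>_. D)"

definition vhat :: "('a set \<Rightarrow> real) \<Rightarrow> nat \<Rightarrow> (nat \<Rightarrow> 'a set) \<Rightarrow> 'a \<Rightarrow> real" where
  "vhat f k Ss i =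
     (let Si = {j\<in>{..<k}. i \<in> Ss j}; Sni = {j\<in>{..<k}. i \<notin> Ss j} in
      (\<Sum>j\<in>Si. f (Ss j)) / real (card Si) - (\<Sum>j\<in>Sni. f (Ss j)) / real (card Sni))"

definition cond_marg :: "('a set \<Rightarrow> real) \<Rightarrow> 'a set pmf \<Rightarrow> 'a \<Rightarrow> real" where
  "cond_marg f D i =
     measure_pmf.expectation (cond_pmf D {S. i \<notin> S}) (\<lambda>S. f (insert i S) - f S)"

end

theory Submission
  imports Defs
begin


lemma samples_support:
  assumes "Ss \<in> set_pmf (samples k D)" "j < k"
  shows "Ss j \<in> set_pmf D"
  using assms set_Pi_pmf_subset'[of "{..<k}" "{}" "\<lambda>_. D"]
  by (auto simp: samples_def PiE_dflt_def)

lemma hoeff_samples: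
  fixes D :: "'a set pmf" and g :: "'a set \<Rightarrow> real"
  assumes k: "k > 0" and lohi: "lo < hi" and bnd: "\<forall>S\<in>set_pmf D. g S \<in> {lo..hi}" and d: "\<delta> \<ge> 0"
  shows "measure_pmf.prob (samples k D)
           {Ss. \<bar>(\<Sum>j<k. g (Ss j)) / real k - measure_pmf.expectation D g\<bar> \<ge> \<delta>}
         \<le> 2 * exp (-2 * real k * \<delta>\<^sup>2 / (hi - lo)\<^sup>2)"
proof -
  have comp: "map_pmf (\<lambda>Ss. Ss j) (samples k D) = D" if "j < k" for j
    using that by (simp add: samples_def Pi_pmf_component)
  have distr: "distr (measure_pmf (samples k D)) borel (\<lambda>Ss. g (Ss j)) = distr (measure_pmf D) borel g"
    if "j < k" for j
  proof -
    have "distr (measure_pmf (samples k D)) borel (\<lambda>Ss. g (Ss j)) =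
          distr (measure_pmf (map_pmf (\<lambda>Ss. Ss j) (samples k D))) borel g"
      unfolding map_pmf_rep_eq by (subst distr_distr) (auto simp: o_def)
    then show ?thesis using comp[OF that] by simp
  qed
  interpret H: Hoeffding_ineq_iid "measure_pmf (samples k D)" "{..<k}" "\<lambda>j Ss. g (Ss j)"
     "\<lambda>Ss. g (Ss 0)" lo hi "measure_pmf.expectation D g"
  proof unfold_locales
    show "prob_space.indep_vars (measure_pmf (samples k D)) (\<lambda>_. borel) (\<lambda>j Ss. g (Ss j)) {..<k}"
      unfolding samples_def
      by (intro prob_space.indep_vars_compose2[OF _ indep_vars_Pi_pmf])
         (auto simp: measure_pmf.prob_space_axioms)
    show "distr (measure_pmf (samples k D)) borel (\<lambda>Ss. g (Ss j)) =
          distr (measure_pmf (samples k D)) borel (\<lambda>Ss. g (Ss 0))" if "j \<in> {..<k}" for j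
      using distr[of j] distr[of 0] that k by simp
    show "AE x in measure_pmf (samples k D). g (x 0) \<in> {lo..hi}"
      using bnd samples_support[of _ k D 0] k by (auto simp: AE_measure_pmf_iff)
    have "measure_pmf.expectation (samples k D) (\<lambda>Ss. g (Ss 0)) =
          measure_pmf.expectation (map_pmf (\<lambda>Ss. Ss 0) (samples k D)) g" by simp
    then show "measure_pmf.expectation D g \<equiv> measure_pmf.expectation (samples k D) (\<lambda>Ss. g (Ss 0))"
      using comp[of 0] k by simp
  qed auto
  show ?thesis
    using H.Hoeffding_ineq_abs_ge'[OF d lohi] k by (simp add: lessThan_empty_iff)
qed


lemma prod_dist_bind:
  assumes "i < n"
  shows "prod_dist n \<pi> = bind_pmf (bernoulli_pmf (\<pi> i)) (\<lambda>y. map_pmf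
     (\<lambda>x. if y then insert i {j\<in>{..<n}. j \<noteq> i \<and> x j} else {j\<in>{..<n}. j \<noteq> i \<and> x j})
     (Pi_pmf ({..<n}-{i}) False (\<lambda>j. bernoulli_pmf (\<pi> j))))"
proof -
  let ?A = "{..<n}-{i}"
  let ?p = "\<lambda>j. bernoulli_pmf (\<pi> j)"
  have eq: "{..<n} = insert i ?A" using assms by auto
  have "prod_dist n \<pi> = map_pmf (\<lambda>x. {j\<in>{..<n}. x j}) (Pi_pmf (insert i ?A) False ?p)"
    unfolding prod_dist_def using eq by simp
  also have "\<dots> = map_pmf (\<lambda>x. {j\<in>{..<n}. x j})
      (bind_pmf (?p i) (\<lambda>y. map_pmf (\<lambda>f. f(i:=y)) (Pi_pmf ?A False ?p)))"
    by (subst Pi_pmf_insert') (auto simp: map_pmf_def)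
  also have "\<dots> = bind_pmf (?p i) (\<lambda>y. map_pmf (\<lambda>f. {j\<in>{..<n}. (f(i:=y)) j}) (Pi_pmf ?A False ?p))"
    by (simp add: map_bind_pmf pmf.map_comp o_def)
  also have "\<dots> = bind_pmf (?p i) (\<lambda>y. map_pmf
     (\<lambda>x. if y then insert i {j\<in>{..<n}. j \<noteq> i \<and> x j} else {j\<in>{..<n}. j \<noteq> i \<and> x j})
     (Pi_pmf ?A False ?p))"
    apply (intro bind_pmf_cong refl pmf.map_cong)
    using assms by auto
  finally show ?thesis .
qed

lemma prod_dist_expect:
  assumes "i < n" "0 \<le> \<pi> i" "\<pi> i \<le> 1"
  shows "measure_pmf.expectation (prod_dist n \<pi>) (\<phi> :: nat set \<Rightarrow> real) =
    \<pi> i * measure_pmf.expectation (Pi_pmf ({..<n}-{i}) False (\<lambda>j. bernoulli_pmf (\<pi> j)))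
       (\<lambda>x. \<phi> (insert i {j\<in>{..<n}. j \<noteq> i \<and> x j}))
    + (1 - \<pi> i) * measure_pmf.expectation (Pi_pmf ({..<n}-{i}) False (\<lambda>j. bernoulli_pmf (\<pi> j)))
       (\<lambda>x. \<phi> {j\<in>{..<n}. j \<noteq> i \<and> x j})"
proof -
  have fin: "finite (set_pmf (map_pmf
     (\<lambda>x. if y then insert i {j\<in>{..<n}. j \<noteq> i \<and> x j} else {j\<in>{..<n}. j \<noteq> i \<and> x j})
     (Pi_pmf ({..<n}-{i}) False (\<lambda>j. bernoulli_pmf (\<pi> j)))))" for y
    by (rule finite_subset[of _ "Pow {..<n}"]) (use assms in auto)
  show ?thesis
    apply (subst prod_dist_bind[OF assms(1)])
    apply (subst pmf_expectation_bind[where A=UNIV])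
    using fin assms by (auto simp: UNIV_bool)
qed

lemma set_prod_dist: "set_pmf (prod_dist n \<pi>) \<subseteq> Pow {..<n}"
  unfolding prod_dist_def by auto

lemma expect_cond:
  fixes h :: "'a \<Rightarrow> real"
  assumes fin: "finite (set_pmf D)" and ne: "set_pmf D \<inter> B \<noteq> {}"
  shows "measure_pmf.expectation (cond_pmf D B) h =
         measure_pmf.expectation D (\<lambda>x. indicator B x * h x) / measure_pmf.prob D B"
proof -
  have "measure_pmf.expectation (cond_pmf D B) h = (\<Sum>a\<in>set_pmf D. pmf (cond_pmf D B) a *\<^sub>R h a)"
    by (rule integral_measure_pmf[OF fin]) (use ne in auto)
  also have "\<dots> = (\<Sum>a\<in>set_pmf D. pmf D a *\<^sub>R (indicator B a * h a)) / measure_pmf.prob D B"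
    by (simp add: pmf_cond[OF ne] sum_divide_distrib indicator_def, intro sum.cong refl, auto)
  also have "(\<Sum>a\<in>set_pmf D. pmf D a *\<^sub>R (indicator B a * h a)) =
     measure_pmf.expectation D (\<lambda>x. indicator B x * h x)"
    by (rule integral_measure_pmf[OF fin, symmetric]) auto
  finally show ?thesis .
qed


lemma ratio_bound:
  fixes a y x W M t :: real
  assumes "\<bar>y - a\<bar> < t" "t \<le> a/2" "0 \<le> W" "W \<le> M" "\<bar>x - a*W\<bar> < t*M" "0 < t"
  shows "\<bar>x/y - W\<bar> \<le> 4*t*M/a"
proof -
  have a: "a > 0" using assms by linarith
  have y: "y \<ge> a/2" using assms by linarith
  have "\<bar>a*W - y*W\<bar> = \<bar>a - y\<bar> * W" using assms by (simp add: abs_mult left_diff_distrib[symmetric])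
  also have "\<dots> \<le> t * M" using assms by (intro mult_mono) auto
  finally have "\<bar>x - y*W\<bar> \<le> 2*t*M" using assms(5) by linarith
  moreover have "\<bar>x/y - W\<bar> = \<bar>x - y*W\<bar> / y" using y a by (simp add: field_simps)
  ultimately have "\<bar>x/y - W\<bar> \<le> 2*t*M / y" using y a by (simp add: divide_right_mono)
  also have "\<dots> \<le> 2*t*M / (a/2)"
    using y a assms by (intro divide_left_mono) (auto intro: mult_nonneg_nonneg)
  finally show ?thesis by simp
qed

lemma finite_set_Pi_bern: "finite A \<Longrightarrow> finite (set_pmf (Pi_pmf A False (\<lambda>j. bernoulli_pmf (\<pi> j))))"
  by (rule finite_subset[OF set_Pi_pmf_subset']) auto

lemma exp_le_const:
  fixes P :: "'a pmf" and g :: "'a \<Rightarrow> real" assumes "\<And>x. g x \<le> M" "finite (set_pmf P)"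
  shows "measure_pmf.expectation P g \<le> M"
proof -
  have "measure_pmf.expectation P g \<le> measure_pmf.expectation P (\<lambda>_. M)"
    by (rule integral_mono) (auto intro: integrable_measure_pmf_finite assms)
  thus ?thesis by simp
qed

lemma exp_ge_const:
  fixes P :: "'a pmf" and g :: "'a \<Rightarrow> real" assumes "\<And>x. g x \<ge> M" "finite (set_pmf P)"
  shows "measure_pmf.expectation P g \<ge> M"
proof -
  have "measure_pmf.expectation P g \<ge> measure_pmf.expectation P (\<lambda>_. M)"
    by (rule integral_mono) (auto intro: integrable_measure_pmf_finite assms)
  thus ?thesis by simp
qed

lemma index_facts:
  fixes f :: "nat set \<Rightarrow> real"
  assumes i: "i < n" and a: "0 < \<pi> i" "\<pi> i < 1"
    and mono: "\<forall>A B. A \<subseteq> B \<and> B \<subseteq> {..<n} \<longrightarrow> f A \<le> f B" and f0: "f {} \<ge> 0"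
  shows "\<exists>W W0. 0 \<le> W \<and> W \<le> f {..<n} \<and> 0 \<le> W0 \<and> W0 \<le> f {..<n} \<and>
     measure_pmf.expectation (prod_dist n \<pi>) (\<lambda>S. of_bool (i \<in> S)) = \<pi> i \<and>
     measure_pmf.expectation (prod_dist n \<pi>) (\<lambda>S. of_bool (i \<in> S) * f S) = \<pi> i * W \<and>
     measure_pmf.expectation (prod_dist n \<pi>) (\<lambda>S. of_bool (i \<notin> S) * f S) = (1 - \<pi> i) * W0 \<and>
     cond_marg f (prod_dist n \<pi>) i = W - W0"
proof -
  define P where "P = Pi_pmf ({..<n}-{i}) False (\<lambda>j. bernoulli_pmf (\<pi> j))"
  define T where "T = (\<lambda>x. {j\<in>{..<n}. j \<noteq> i \<and> x j})"
  define W where "W = measure_pmf.expectation P (\<lambda>x. f (insert i (T x)))"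
  define W0 where "W0 = measure_pmf.expectation P (\<lambda>x. f (T x))"
  let ?D = "prod_dist n \<pi>"
  have finP: "finite (set_pmf P)" unfolding P_def by (rule finite_set_Pi_bern) auto
  have iT: "i \<notin> T x" for x unfolding T_def by auto
  have Tsub: "T x \<subseteq> {..<n}" "insert i (T x) \<subseteq> {..<n}" for x unfolding T_def using i by auto
  have fb: "0 \<le> f S \<and> f S \<le> f {..<n}" if "S \<subseteq> {..<n}" for S
    using mono[rule_format, of "{}" S] mono[rule_format, of S "{..<n}"] that f0 by auto
  have E: "measure_pmf.expectation ?D \<phi> =
    \<pi> i * measure_pmf.expectation P (\<lambda>x. \<phi> (insert i (T x))) + (1 - \<pi> i) * measure_pmf.expectation P (\<lambda>x. \<phi> (T x))"
    for \<phi> :: "nat set \<Rightarrow> real"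
    using prod_dist_expect[OF i, of \<pi> \<phi>] a unfolding P_def T_def by simp
  have W: "0 \<le> W" "W \<le> f {..<n}" unfolding W_def
    by (intro exp_ge_const exp_le_const finP; use fb Tsub in blast)+
  have W0: "0 \<le> W0" "W0 \<le> f {..<n}" unfolding W0_def
    by (intro exp_ge_const exp_le_const finP; use fb Tsub in blast)+
  have e1: "measure_pmf.expectation ?D (\<lambda>S. of_bool (i \<in> S)) = \<pi> i"
    using E[of "\<lambda>S. of_bool (i \<in> S)"] iT by simp
  have e2: "measure_pmf.expectation ?D (\<lambda>S. of_bool (i \<in> S) * f S) = \<pi> i * W"
    using E[of "\<lambda>S. of_bool (i \<in> S) * f S"] iT unfolding W_def by simp
  have e3: "measure_pmf.expectation ?D (\<lambda>S. of_bool (i \<notin> S) * f S) = (1 - \<pi> i) * W0"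
    using E[of "\<lambda>S. of_bool (i \<notin> S) * f S"] iT unfolding W0_def by simp
  let ?B = "{S. i \<notin> S}"
  have finD: "finite (set_pmf ?D)" by (rule finite_subset[OF set_prod_dist]) auto
  have pB: "measure_pmf.prob ?D ?B = 1 - \<pi> i"
  proof -
    have "measure_pmf.prob ?D ?B = measure_pmf.expectation ?D (indicator ?B)" by simp
    also have "\<dots> = 1 - \<pi> i" using E[of "indicator ?B"] iT by (simp add: indicator_def)
    finally show ?thesis .
  qed
  have ne: "set_pmf ?D \<inter> ?B \<noteq> {}"
    using pB a measure_pmf_zero_iff[of ?D ?B] by auto
  have "cond_marg f ?D i = measure_pmf.expectation ?D (\<lambda>S. indicator ?B S * (f (insert i S) - f S)) / (1 - \<pi> i)"
    unfolding cond_marg_def using expect_cond[OF finD ne] pB by simp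
  also have "measure_pmf.expectation ?D (\<lambda>S. indicator ?B S * (f (insert i S) - f S)) =
      (1 - \<pi> i) * measure_pmf.expectation P (\<lambda>x. f (insert i (T x)) - f (T x))"
    using E[of "\<lambda>S. indicator ?B S * (f (insert i S) - f S)"] iT by (simp add: indicator_def)
  also have "measure_pmf.expectation P (\<lambda>x. f (insert i (T x)) - f (T x)) = W - W0"
    unfolding W_def W0_def by (intro Bochner_Integration.integral_diff integrable_measure_pmf_finite finP)
  finally have "cond_marg f ?D i = W - W0" using a by simp
  with W W0 e1 e2 e3 show ?thesis by blast
qed


lemma vhat_alt:
  assumes k: "k > 0"
  shows "vhat f k Ss i =
    ((\<Sum>j<k. of_bool (i \<in> Ss j) * f (Ss j)) / real k) / ((\<Sum>j<k. of_bool (i \<in> Ss j)) / real k)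
  - ((\<Sum>j<k. of_bool (i \<notin> Ss j) * f (Ss j)) / real k) / (1 - (\<Sum>j<k. of_bool (i \<in> Ss j)) / real k)"
proof -
  have c1: "real (card {j\<in>{..<k}. i \<in> Ss j}) = (\<Sum>j<k. of_bool (i \<in> Ss j))"
    by (simp add: sum.inter_filter[symmetric] of_bool_def)
  have "real (card {j\<in>{..<k}. i \<notin> Ss j}) = (\<Sum>j<k. of_bool (i \<notin> Ss j))"
    by (simp add: sum.inter_filter[symmetric] of_bool_def)
  also have "\<dots> = (\<Sum>j<k. 1 - of_bool (i \<in> Ss j))" by (intro sum.cong) auto
  also have "\<dots> = real k - (\<Sum>j<k. of_bool (i \<in> Ss j))" by (simp add: sum_subtractf)
  finally have c2: "real (card {j\<in>{..<k}. i \<notin> Ss j}) = real k - (\<Sum>j<k. of_bool (i \<in> Ss j))" .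
  have s1: "(\<Sum>j\<in>{j\<in>{..<k}. i \<in> Ss j}. f (Ss j)) = (\<Sum>j<k. of_bool (i \<in> Ss j) * f (Ss j))"
  proof -
    have "(\<Sum>j<k. of_bool (i \<in> Ss j) * f (Ss j)) = (\<Sum>j<k. if i \<in> Ss j then f (Ss j) else 0)"
      by (rule sum.cong) auto
    thus ?thesis by (simp only: sum.inter_filter[OF finite_lessThan])
  qed
  have s2: "(\<Sum>j\<in>{j\<in>{..<k}. i \<notin> Ss j}. f (Ss j)) = (\<Sum>j<k. of_bool (i \<notin> Ss j) * f (Ss j))"
  proof -
    have "(\<Sum>j<k. of_bool (i \<notin> Ss j) * f (Ss j)) = (\<Sum>j<k. if i \<notin> Ss j then f (Ss j) else 0)"
      by (rule sum.cong) auto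
    thus ?thesis by (simp only: sum.inter_filter[OF finite_lessThan])
  qed
  have e: "1 - (\<Sum>j<k. of_bool (i \<in> Ss j)) / real k = (real k - (\<Sum>j<k. of_bool (i \<in> Ss j))) / real k"
    using k by (simp add: field_simps)
  show ?thesis unfolding vhat_def Let_def c1 c2 s1 s2 e using k by simp
qed


lemma det_i:
  fixes a y x1 x0 W W0 M t Q :: real
  assumes "1/Q \<le> a" "a \<le> 1 - 1/Q" "Q > 0" "0 < t" "t \<le> 1/(2*Q)"
    "0 \<le> W" "W \<le> M" "0 \<le> W0" "W0 \<le> M"
    "\<bar>y - a\<bar> < t" "\<bar>x1 - a*W\<bar> < t*M" "\<bar>x0 - (1-a)*W0\<bar> < t*M"
  shows "\<bar>x1/y - x0/(1-y) - (W - W0)\<bar> \<le> 8*t*M*Q"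
proof -
  have iq: "1/Q > 0" using assms(3) by simp
  have a0: "a > 0" using assms(1) iq by linarith
  have a1: "1 - a > 0" using assms(2) iq by linarith
  have M: "M \<ge> 0" using assms(6,7) by linarith
  have h: "1/(2*Q) = (1/Q)/2" by simp
  have tq: "t \<le> a/2" "t \<le> (1-a)/2" using assms(1,2,5) unfolding h by auto
  have r1: "\<bar>x1/y - W\<bar> \<le> 4*t*M/a"
    by (rule ratio_bound) (use assms tq in auto)
  have r0: "\<bar>x0/(1-y) - W0\<bar> \<le> 4*t*M/(1-a)"
    by (rule ratio_bound[of "1-y" "1-a"]) (use assms tq in \<open>auto simp: abs_minus_commute\<close>)
  have tm: "4*t*M \<ge> 0" using M assms(4) by simp
  have q1: "1 \<le> a * Q" using assms(1,3) by (simp add: pos_divide_le_eq)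
  have "1/Q \<le> 1-a" using assms(2) by linarith
  hence q2: "1 \<le> (1-a) * Q" using assms(3) by (simp add: pos_divide_le_eq)
  have "1/a \<le> Q" using q1 a0 by (simp add: pos_divide_le_eq mult.commute)
  hence "(4*t*M) * (1/a) \<le> (4*t*M) * Q" using tm by (rule mult_left_mono)
  hence s1: "4*t*M/a \<le> 4*t*M*Q" by simp
  have "1/(1-a) \<le> Q" using q2 a1 by (simp add: pos_divide_le_eq mult.commute)
  hence "(4*t*M) * (1/(1-a)) \<le> (4*t*M) * Q" using tm by (rule mult_left_mono)
  hence s0: "4*t*M/(1-a) \<le> 4*t*M*Q" by simp
  show ?thesis using r1 r0 s1 s0 by linarith
qed


theorem lemma5:
  fixes q p :: "real poly"
  assumes "\<forall>n. poly q (real n) > 0"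
      and "\<forall>n. poly p (real n) > 0"
  shows "\<exists>m0 :: real poly. \<exists>C :: real.
    \<forall>(n::nat) (f :: nat set \<Rightarrow> real) (\<pi> :: nat \<Rightarrow> real) (\<epsilon>::real) (k::nat).
      (\<forall>A B. A \<subseteq> B \<and> B \<subseteq> {..<n} \<longrightarrow> f A \<le> f B) \<longrightarrow>
      f {} \<ge> 0 \<longrightarrow>
      (\<forall>i<n. 1 / poly q (real n) \<le> \<pi> i \<and> \<pi> i \<le> 1 - 1 / poly q (real n)) \<longrightarrow>
      \<epsilon> \<ge> f {..<n} / poly p (real n) \<longrightarrow>
      real k \<ge> poly m0 (real n) \<longrightarrow>
      measure_pmf.prob (samples k (prod_dist n \<pi>))
        {Ss. \<exists>i<n. \<bar>vhat f k Ss i - cond_marg f (prod_dist n \<pi>) i\<bar> > \<epsilon>}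
      \<le> C * exp (- real n)"
proof -
  define m0 :: "real poly" where "m0 = [:0,256:] * (p + 1)^2 * q^2"
  have m0: "poly m0 x = 256 * x * (poly p x + 1)^2 * (poly q x)^2" for x by (simp add: m0_def)
  show ?thesis
  proof (intro exI[of _ m0] exI[of _ 6] allI impI)
    fix n f \<pi> \<epsilon> k
    assume mono: "\<forall>A B. A \<subseteq> B \<and> B \<subseteq> {..<n} \<longrightarrow> f A \<le> f B" and f0: "f {} \<ge> 0"
      and pib: "\<forall>i<n. 1 / poly q (real n) \<le> \<pi> i \<and> \<pi> i \<le> 1 - 1 / poly q (real n)"
      and eps: "\<epsilon> \<ge> f {..<n} / poly p (real n)" and kb: "real k \<ge> poly m0 (real n)"
    let ?D = "prod_dist n \<pi>"
    let ?E = "{Ss. \<exists>i<n. \<bar>vhat f k Ss i - cond_marg f ?D i\<bar> > \<epsilon>}"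
    show "measure_pmf.prob (samples k ?D) ?E \<le> 6 * exp (- real n)"
    proof (cases "n = 0")
      case True
      then show ?thesis by simp
    next
      case False
      define Q where "Q = poly q (real n)"
      define Pn where "Pn = poly p (real n)"
      define M where "M = f {..<n}"
      have Q0: "Q > 0" using assms(1) unfolding Q_def by blast
      have P0: "Pn > 0" using assms(2) unfolding Pn_def by blast
      have pib': "1/Q \<le> \<pi> i \<and> \<pi> i \<le> 1 - 1/Q" if "i < n" for i
        using pib that unfolding Q_def by blast
      have iq: "1/Q > 0" using Q0 by simp
      have pia: "0 < \<pi> i \<and> \<pi> i < 1" if "i < n" for i
        using pib'[OF that] iq by linarith
      define t where "t = 1/(16*(Pn+1)*Q)"
      have t0: "t > 0" using P0 Q0 unfolding t_def by simp
      have tQ: "t \<le> 1/(2*Q)" unfolding t_def using P0 Q0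
        by (intro divide_left_mono) (auto intro: mult_pos_pos)
      have c0: "16*(Pn+1)*Q \<noteq> 0" using P0 Q0 by simp
      have cc: "256*(Pn+1)^2*Q^2 = (16*(Pn+1)*Q)^2" by (simp only: power_mult_distrib) simp
      have t2: "256*(Pn+1)^2*Q^2 * t^2 = 1" unfolding t_def cc using c0
        by (simp add: power_one_over[symmetric] power_mult_distrib[symmetric])
      have "real k * t^2 \<ge> real n * (256*(Pn+1)^2*Q^2 * t^2)"
      proof -
        have "real k \<ge> real n * (256*(Pn+1)^2*Q^2)" using kb m0 unfolding Pn_def Q_def by (simp add: algebra_simps)
        hence "real k * t^2 \<ge> (real n * (256*(Pn+1)^2*Q^2)) * t^2" by (intro mult_right_mono) auto
        thus ?thesis by (simp add: algebra_simps)
      qed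
      hence kt: "real k * t^2 \<ge> real n" using t2 by simp
      have k0: "k > 0"
      proof (rule ccontr)
        assume "\<not> k > 0" hence "k = 0" by simp
        with kt False show False by simp
      qed
      have fb: "0 \<le> f S \<and> f S \<le> M" if "S \<subseteq> {..<n}" for S
        using mono[rule_format, of "{}" S] mono[rule_format, of S "{..<n}"] that f0 unfolding M_def by auto
      have M0: "M \<ge> 0" using fb[of "{..<n}"] by simp
      have suppD: "S \<subseteq> {..<n}" if "S \<in> set_pmf ?D" for S using set_prod_dist that by blast
      have eps0: "\<epsilon> \<ge> 0" using eps M0 P0 unfolding M_def Pn_def by (meson divide_nonneg_pos order_trans)
      show ?thesis
      proof (cases "M = 0")
        case True
        have "set_pmf (samples k ?D) \<inter> ?E = {}"
        proof (rule ccontr)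
          assume "set_pmf (samples k ?D) \<inter> ?E \<noteq> {}"
          then obtain Ss i where Ss: "Ss \<in> set_pmf (samples k ?D)" and i: "i < n"
            and gt: "\<bar>vhat f k Ss i - cond_marg f ?D i\<bar> > \<epsilon>" by blast
          have fz: "f (Ss j) = 0" if "j < k" for j
            using fb[OF suppD[OF samples_support[OF Ss that]]] True by simp
          have "vhat f k Ss i = 0" unfolding vhat_def Let_def
            by (simp add: fz)
          moreover obtain W W0 where "0 \<le> W" "W \<le> M" "0 \<le> W0" "W0 \<le> M" "cond_marg f ?D i = W - W0"
            using index_facts[OF i _ _ mono f0, of \<pi>] pia[OF i] unfolding M_def by blast
          ultimately show False using gt eps0 True by simp
        qed
        hence "measure_pmf.prob (samples k ?D) ?E = 0" by (simp add: measure_pmf_zero_iff)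
        thus ?thesis by simp
      next
        case False
        have Mpos: "M > 0" using False M0 by simp
        define BY where "BY i = {Ss. t \<le> \<bar>(\<Sum>j<k. of_bool (i \<in> Ss j)) / real k
             - measure_pmf.expectation ?D (\<lambda>S. of_bool (i \<in> S))\<bar>}" for i
        define B1 where "B1 i = {Ss. t*M \<le> \<bar>(\<Sum>j<k. of_bool (i \<in> Ss j) * f (Ss j)) / real k
             - measure_pmf.expectation ?D (\<lambda>S. of_bool (i \<in> S) * f S)\<bar>}" for i
        define B0 where "B0 i = {Ss. t*M \<le> \<bar>(\<Sum>j<k. of_bool (i \<notin> Ss j) * f (Ss j)) / real k
             - measure_pmf.expectation ?D (\<lambda>S. of_bool (i \<notin> S) * f S)\<bar>}" for i
        have pY: "measure_pmf.prob (samples k ?D) (BY i) \<le> 2 * exp (-2 * real k * t^2)" for i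
          using hoeff_samples[OF k0, of 0 1 ?D "\<lambda>S. of_bool (i \<in> S)" t] t0
          unfolding BY_def by simp
        have tM: "(t*M)^2 / (M - 0)^2 = t^2" using Mpos by (simp add: power_mult_distrib)
        have p1: "measure_pmf.prob (samples k ?D) (B1 i) \<le> 2 * exp (-2 * real k * t^2)" for i
        proof -
          have "measure_pmf.prob (samples k ?D) (B1 i) \<le> 2 * exp (-2 * real k * (t*M)^2 / (M - 0)^2)"
            unfolding B1_def
            by (rule hoeff_samples[OF k0 Mpos]) (use t0 Mpos fb suppD in auto)
          also have "-2 * real k * (t*M)^2 / (M - 0)^2 = -2 * real k * t^2"
            using tM by (metis times_divide_eq_right)
          finally show ?thesis .
        qed
        have p0: "measure_pmf.prob (samples k ?D) (B0 i) \<le> 2 * exp (-2 * real k * t^2)" for i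
        proof -
          have "measure_pmf.prob (samples k ?D) (B0 i) \<le> 2 * exp (-2 * real k * (t*M)^2 / (M - 0)^2)"
            unfolding B0_def
            by (rule hoeff_samples[OF k0 Mpos]) (use t0 Mpos fb suppD in auto)
          also have "-2 * real k * (t*M)^2 / (M - 0)^2 = -2 * real k * t^2"
            using tM by (metis times_divide_eq_right)
          finally show ?thesis .
        qed
        have ex: "exp (-2 * real k * t^2) \<le> exp (-2 * real n)" using kt by simp
        have err: "8*t*M*Q \<le> \<epsilon>"
        proof -
          have pp: "Pn + 1 \<noteq> 0" "1 + Pn \<noteq> 0" "Q \<noteq> 0" using P0 Q0 by auto
          have tt: "t * (16*(Pn+1)*Q) = 1" unfolding t_def using c0 by simp
          have "8*t*M*Q*(2*(Pn+1)) = M * (t*(16*(Pn+1)*Q))" by (simp add: algebra_simps)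
          hence "8*t*M*Q*(2*(Pn+1)) = M" using tt by (simp only: mult_1_right)
          hence "8*t*M*Q = M / (2*(Pn+1))" using pp by (simp add: eq_divide_eq)
          also have "\<dots> \<le> M / Pn" using P0 M0 by (intro divide_left_mono) auto
          also have "\<dots> \<le> \<epsilon>" using eps unfolding M_def Pn_def .
          finally show ?thesis .
        qed
        have sub: "?E \<subseteq> (\<Union>i\<in>{..<n}. BY i \<union> B1 i \<union> B0 i)"
        proof
          fix Ss assume "Ss \<in> ?E"
          then obtain i where i: "i < n" and gt: "\<bar>vhat f k Ss i - cond_marg f ?D i\<bar> > \<epsilon>" by blast
          show "Ss \<in> (\<Union>i\<in>{..<n}. BY i \<union> B1 i \<union> B0 i)"
          proof (rule ccontr)
            assume "Ss \<notin> (\<Union>i\<in>{..<n}. BY i \<union> B1 i \<union> B0 i)"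
            hence nb: "Ss \<notin> BY i" "Ss \<notin> B1 i" "Ss \<notin> B0 i" using i by auto
            obtain W W0 where W: "0 \<le> W" "W \<le> M" "0 \<le> W0" "W0 \<le> M"
              and e1: "measure_pmf.expectation ?D (\<lambda>S. of_bool (i \<in> S)) = \<pi> i"
              and e2: "measure_pmf.expectation ?D (\<lambda>S. of_bool (i \<in> S) * f S) = \<pi> i * W"
              and e3: "measure_pmf.expectation ?D (\<lambda>S. of_bool (i \<notin> S) * f S) = (1 - \<pi> i) * W0"
              and cm: "cond_marg f ?D i = W - W0"
              using index_facts[OF i _ _ mono f0, of \<pi>] pia[OF i] unfolding M_def by blast
            define y where "y = (\<Sum>j<k. of_bool (i \<in> Ss j)) / real k"
            define x1 where "x1 = (\<Sum>j<k. of_bool (i \<in> Ss j) * f (Ss j)) / real k"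
            define x0 where "x0 = (\<Sum>j<k. of_bool (i \<notin> Ss j) * f (Ss j)) / real k"
            have hy: "\<bar>y - \<pi> i\<bar> < t" using nb(1) e1 unfolding BY_def y_def by auto
            have h1: "\<bar>x1 - \<pi> i * W\<bar> < t*M" using nb(2) e2 unfolding B1_def x1_def by auto
            have h0: "\<bar>x0 - (1 - \<pi> i) * W0\<bar> < t*M" using nb(3) e3 unfolding B0_def x0_def by auto
            have "vhat f k Ss i = x1/y - x0/(1-y)" unfolding x1_def x0_def y_def by (rule vhat_alt[OF k0])
            moreover have "\<bar>x1/y - x0/(1-y) - (W - W0)\<bar> \<le> 8*t*M*Q"
              by (rule det_i) (use pib'[OF i] Q0 t0 tQ W hy h1 h0 in auto)
            ultimately show False using gt cm err by simp
          qed
        qed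
        have "measure_pmf.prob (samples k ?D) ?E \<le>
              measure_pmf.prob (samples k ?D) (\<Union>i\<in>{..<n}. BY i \<union> B1 i \<union> B0 i)"
          by (rule measure_pmf.finite_measure_mono[OF sub]) simp
        also have "\<dots> \<le> (\<Sum>i<n. measure_pmf.prob (samples k ?D) (BY i \<union> B1 i \<union> B0 i))"
          by (rule measure_pmf.finite_measure_subadditive_finite) auto
        also have "\<dots> \<le> (\<Sum>i<n. 6 * exp (-2 * real n))"
        proof (rule sum_mono)
          fix i
          have "measure_pmf.prob (samples k ?D) (BY i \<union> B1 i \<union> B0 i) \<le>
                measure_pmf.prob (samples k ?D) (BY i \<union> B1 i) + measure_pmf.prob (samples k ?D) (B0 i)"
            by (rule measure_Un_le) auto
          also have "\<dots> \<le> measure_pmf.prob (samples k ?D) (BY i) + measure_pmf.prob (samples k ?D) (B1 i)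
               + measure_pmf.prob (samples k ?D) (B0 i)"
            using measure_Un_le[of "BY i" "measure_pmf (samples k ?D)" "B1 i"] by simp
          also have "\<dots> \<le> 6 * exp (-2 * real n)" using pY[of i] p1[of i] p0[of i] ex by linarith
          finally show "measure_pmf.prob (samples k ?D) (BY i \<union> B1 i \<union> B0 i) \<le> 6 * exp (-2 * real n)" .
        qed
        also have "\<dots> = 6 * (real n * exp (-2 * real n))" by simp
        also have "real n * exp (-2 * real n) \<le> exp (real n) * exp (-2 * real n)"
          using exp_ge_add_one_self[of "real n"] by (intro mult_right_mono) (linarith, simp)
        also have "exp (real n) * exp (-2 * real n) = exp (- real n)" by (simp flip: exp_add)
        finally show ?thesis by simp
      qed
    qed
  qed
qed


end
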